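(* Let $\boldsymbol{H}\in\mathbb{F}_q^{r\times m}$, $k\in\{2,\dots,r\}$, $i\in L\subseteq[m]$, and regard all entries of $\boldsymbol{H}_{[k]}^{L}$ as fixed except $h_{k,i}$. If $L$ is a circuit of $\boldsymbol{H}_{[k-1]}$, then there is exactly one value $c\in\mathbb{F}_q$ such that, when $h_{k,i}=c$, the columns of $\boldsymbol{H}_{[k]}$ indexed by $L$ are linearly dependent; for every $h_{k,i}\in\mathbb{F}_q\setminus\{c\}$, $L$ is an independent set of $\boldsymbol{H}_{[k]}$.
   Context: $\boldsymbol{H}_{[k]}$ is the submatrix of the first $k$ rows of $\boldsymbol{H}$ and $\boldsymbol{H}_{[k]}^{L}$ its submatrix with columns in $L$. For a matrix with columns indexed by $[m]$, $S\subseteq[m]$ is independent if the columns indexed by $S$ are linearly independent, dependent otherwise, and a circuit if it is dependent while every proper subset is independent. *)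

theory Defs
  imports Main
begin

text \<open>A matrix over a field is a function of (row, column) indices; rows and
columns are 1-based: rows 1..r, columns 1..m.  H_[k] is the submatrix of the
first k rows, i.e. rows 1..k.\<close>

definition col_indep :: "(nat \<Rightarrow> nat \<Rightarrow> 'a::field) \<Rightarrow> nat \<Rightarrow> nat set \<Rightarrow> bool" where
  "col_indep H k S \<longleftrightarrow>
     (\<forall>a :: nat \<Rightarrow> 'a. (\<forall>j\<in>{1..k}. (\<Sum>l\<in>S. a l * H j l) = 0) \<longrightarrow> (\<forall>l\<in>S. a l = 0))"

definition col_dep :: "(nat \<Rightarrow> nat \<Rightarrow> 'a::field) \<Rightarrow> nat \<Rightarrow> nat set \<Rightarrow> bool" where
  "col_dep H k S \<longleftrightarrow> \<not> col_indep H k S"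

definition col_circuit :: "(nat \<Rightarrow> nat \<Rightarrow> 'a::field) \<Rightarrow> nat \<Rightarrow> nat set \<Rightarrow> bool" where
  "col_circuit H k S \<longleftrightarrow> col_dep H k S \<and> (\<forall>T. T \<subset> S \<longrightarrow> col_indep H k T)"

definition set_entry :: "(nat \<Rightarrow> nat \<Rightarrow> 'a) \<Rightarrow> nat \<Rightarrow> nat \<Rightarrow> 'a \<Rightarrow> (nat \<Rightarrow> nat \<Rightarrow> 'a)" where
  "set_entry H k i c = H(k := (H k)(i := c))"

end

theory Submission
  imports Defs
begin

lemma zero_vanish:
  fixes H :: "nat \<Rightarrow> nat \<Rightarrow> 'a::field"
  assumes fin: "finite L" and circ: "col_circuit H n L"
    and ker: "\<forall>j\<in>{1..n}. (\<Sum>l\<in>L. e l * H j l) = 0"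
    and l: "l \<in> L" and z: "e l = 0"
  shows "\<forall>x\<in>L. e x = 0"
proof -
  have "L - {l} \<subset> L" using l by blast
  then have ind: "col_indep H n (L - {l})" using circ unfolding col_circuit_def by blast
  have "\<forall>j\<in>{1..n}. (\<Sum>x\<in>L - {l}. e x * H j x) = 0"
  proof
    fix j assume j: "j \<in> {1..n}"
    have "(\<Sum>x\<in>L. e x * H j x) = e l * H j l + (\<Sum>x\<in>L - {l}. e x * H j x)"
      using sum.remove[OF fin l] by blast
    then show "(\<Sum>x\<in>L - {l}. e x * H j x) = 0" using ker j z by (metis add_0 mult_zero_left)
  qed
  then have "\<forall>x\<in>L - {l}. e x = 0" using ind unfolding col_indep_def by blast
  then show ?thesis using z by blast
qed

theorem proposition3:
  fixes H :: "nat \<Rightarrow> nat \<Rightarrow> 'a::{finite,field}" and r m k i :: nat and L :: "nat set"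
  assumes "2 \<le> k" and "k \<le> r"
    and "L \<subseteq> {1..m}" and "i \<in> L"
    and "col_circuit H (k - 1) L"
  shows "\<exists>!c. col_dep (set_entry H k i c) k L \<and>
               (\<forall>d. d \<noteq> c \<longrightarrow> col_indep (set_entry H k i d) k L)"
proof -
  have fin: "finite L" using assms(3) finite_subset by blast
  have circ: "col_circuit H (k - 1) L" by fact
  have "\<not> col_indep H (k - 1) L" using circ unfolding col_circuit_def col_dep_def by simp
  then obtain a l0 where aker: "\<forall>j\<in>{1..k-1}. (\<Sum>l\<in>L. a l * H j l) = 0" and l0: "l0 \<in> L" "a l0 \<noteq> 0"
    unfolding col_indep_def by blast
  have ai: "a i \<noteq> 0"
  proof
    assume "a i = 0"
    then have "\<forall>x\<in>L. a x = 0" using zero_vanish[OF fin circ aker assms(4)] by blast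
    then show False using l0 by blast
  qed
  define S where "S = (\<Sum>l\<in>L - {i}. a l * H k l)"
  define c where "c = - S / a i"
  have rows: "\<And>j d. j \<in> {1..k-1} \<Longrightarrow> set_entry H k i d j = H j"
    using assms(1) by (auto simp: set_entry_def)
  have rowk: "\<And>b d. (\<Sum>l\<in>L. b l * set_entry H k i d k l)
      = b i * d + (\<Sum>l\<in>L - {i}. b l * H k l)"
  proof -
    fix b d
    have "(\<Sum>l\<in>L. b l * set_entry H k i d k l)
        = b i * set_entry H k i d k i + (\<Sum>l\<in>L - {i}. b l * set_entry H k i d k l)"
      using sum.remove[OF fin assms(4)] by blast
    also have "(\<Sum>l\<in>L - {i}. b l * set_entry H k i d k l) = (\<Sum>l\<in>L - {i}. b l * H k l)"
      by (rule sum.cong) (auto simp: set_entry_def)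
    finally show "(\<Sum>l\<in>L. b l * set_entry H k i d k l)
      = b i * d + (\<Sum>l\<in>L - {i}. b l * H k l)" by (simp add: set_entry_def)
  qed
  have kerlin: "\<forall>l\<in>L. b l = (b i / a i) * a l"
    if bker: "\<forall>j\<in>{1..k-1}. (\<Sum>l\<in>L. b l * H j l) = 0" for b
  proof -
    define e where "e l = b l - (b i / a i) * a l" for l
    have "\<forall>j\<in>{1..k-1}. (\<Sum>l\<in>L. e l * H j l) = 0"
    proof
      fix j assume j: "j \<in> {1..k-1}"
      have "(\<Sum>l\<in>L. e l * H j l) = (\<Sum>l\<in>L. b l * H j l) - (b i / a i) * (\<Sum>l\<in>L. a l * H j l)"
        unfolding e_def left_diff_distrib sum_subtractf sum_distrib_left mult.assoc ..
      then show "(\<Sum>l\<in>L. e l * H j l) = 0" using j bker aker by simp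
    qed
    moreover have "e i = 0" using ai by (simp add: e_def)
    ultimately have "\<forall>x\<in>L. e x = 0" using zero_vanish[OF fin circ _ assms(4)] by blast
    then show ?thesis by (simp add: e_def)
  qed
  have dep: "col_dep (set_entry H k i c) k L"
    unfolding col_dep_def col_indep_def
  proof
    assume h: "\<forall>a'. (\<forall>j\<in>{1..k}. (\<Sum>l\<in>L. a' l * set_entry H k i c j l) = 0) \<longrightarrow> (\<forall>l\<in>L. a' l = 0)"
    have "\<forall>j\<in>{1..k}. (\<Sum>l\<in>L. a l * set_entry H k i c j l) = 0"
    proof
      fix j assume j: "j \<in> {1..k}"
      show "(\<Sum>l\<in>L. a l * set_entry H k i c j l) = 0"
      proof (cases "j = k")
        case True
        then show ?thesis using rowk[of a c] ai by (simp add: c_def S_def[symmetric])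
      next
        case False
        then have "j \<in> {1..k-1}" using j by auto
        then show ?thesis using rows aker by simp
      qed
    qed
    then show False using h l0 by blast
  qed
  have indep: "col_indep (set_entry H k i d) k L" if dc: "d \<noteq> c" for d
    unfolding col_indep_def
  proof (intro allI impI)
    fix b assume bk: "\<forall>j\<in>{1..k}. (\<Sum>l\<in>L. b l * set_entry H k i d j l) = 0"
    have "\<forall>j\<in>{1..k-1}. (\<Sum>l\<in>L. b l * H j l) = 0"
    proof
      fix j assume j: "j \<in> {1..k-1}"
      then have "j \<in> {1..k}" by auto
      then have "(\<Sum>l\<in>L. b l * set_entry H k i d j l) = 0" using bk by blast
      then show "(\<Sum>l\<in>L. b l * H j l) = 0" using rows[OF j] by simp
    qed
    then have bl: "\<forall>l\<in>L. b l = (b i / a i) * a l" by (rule kerlin)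
    define t where "t = b i / a i"
    have "(\<Sum>l\<in>L. b l * set_entry H k i d k l) = 0" using bk assms(1) by auto
    then have "b i * d + (\<Sum>l\<in>L - {i}. b l * H k l) = 0" using rowk by simp
    moreover have "(\<Sum>l\<in>L - {i}. b l * H k l) = t * S"
      unfolding S_def sum_distrib_left
      by (rule sum.cong) (use bl t_def in auto)
    moreover have "b i = t * a i" using ai by (simp add: t_def)
    ultimately have "t * (a i * d + S) = 0" by (simp add: algebra_simps)
    moreover have "a i * d + S \<noteq> 0"
    proof
      assume "a i * d + S = 0"
      then have "a i * d = - S" by (simp add: eq_neg_iff_add_eq_0)
      then have "d = - S / a i" using ai by (metis nonzero_mult_div_cancel_left divide_minus_left)
      then have "d = c" by (simp add: c_def)
      then show False using dc by blast
    qed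
    ultimately have "t = 0" by simp
    then show "\<forall>l\<in>L. b l = 0" using bl unfolding t_def by (metis mult_zero_left)
  qed
  show ?thesis
  proof (rule ex1I[of _ c])
    show "col_dep (set_entry H k i c) k L \<and> (\<forall>d. d \<noteq> c \<longrightarrow> col_indep (set_entry H k i d) k L)"
      using dep indep by blast
  next
    fix c' assume "col_dep (set_entry H k i c') k L \<and> (\<forall>d. d \<noteq> c' \<longrightarrow> col_indep (set_entry H k i d) k L)"
    then show "c' = c" using dep unfolding col_dep_def by metis
  qed
qed

end
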